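(* Fix an even integer $m$ and an integer $r\ge 0$ with $m-2r\ge0$, and put $\ell_n=\frac{n-m}2+r$ for even $n$. For $y\in\mathbb C$ let $$Q_{n(+)}(y)=Q_{n(+)}(y|A_1,\dots,A_{\ell_n}|B_1,\dots,B_n)=\frac{\prod_{a=r+1}^{\ell_n}(1-A_a^2e^{2y})}{\prod_{j=1}^n(1-B_je^y)}.$$ Consider a family of polynomials $P_n(A_1,\dots,A_{\ell_n}|B_1,\dots,B_n)$ in the $A_a$ whose coefficients are symmetric Laurent polynomials in the $B_j$, and suppose there exist polynomials $\tilde P_n=\tilde P_n(A_1,\dots,A_{\ell_n}|B_1,\dots,B_{n-2}|B)$ and $\overline P_n=\overline P_n(A_1,\dots,A_{\ell_n}|B_1,\dots,B_{n-2}|B)$ in the $A_a$ and constants $d_n$ such that (1) $P_n(A_1,\dots,A_{\ell_n}|B_1,\dots,B_{n-2},B,-B)=\prod_{a=1}^r(1-A_a^2B^{-2})\,\tilde P_n$; (2) $\mathrm{Asym}\{\tilde P_n\}=\mathrm{Asym}\{\prod_{a=r+1}^{\ell_n-1}(1-A_a^2B^{-2})\,\overline P_n\}$; (3) $\overline P_n(A_1,\dots,A_{\ell_n-1},\pm B|B_1,\dots,B_{n-2}|B)=\pm B^{n-1}d_nP_{n-2}(A_1,\dots,A_{\ell_n-1}|B_1,\dots,B_{n-2})$, where Asym denotes antisymmetrization with respect to $A_{r+1},\dots,A_{\ell_n}$. Then $P^{new}_n=P_nQ_{n(+)}(y)$ is symmetric in the $B_j$ and satisfies (1), (2), (3) (with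 $P_n,P_{n-2}$ replaced by $P^{new}_n,P^{new}_{n-2}$) for appropriate $\tilde P^{new}_n$ and $\overline P^{new}_n$.
   Context: Antisymmetrization of a function $f$ of variables $A_{r+1},\dots,A_{\ell_n}$ means $\sum_{\sigma}\mathrm{sgn}(\sigma)\,f(A_{\sigma(r+1)},\dots,A_{\sigma(\ell_n)})$ over permutations $\sigma$ of $\{r+1,\dots,\ell_n\}$. *)

theory Defs
  imports Complex_Main "HOL-Combinatorics.Permutations"
begin

text \<open>Variables A_1, A_2, ... and B_1, B_2, ... are modelled as functions nat => complex;
  only the indicated coordinates are used.\<close>

definition ell :: "nat \<Rightarrow> nat \<Rightarrow> nat \<Rightarrow> nat" where
  "ell m r n = (n - m) div 2 + r"

definition poly_in_A :: "nat \<Rightarrow> ((nat \<Rightarrow> complex) \<Rightarrow> 'b \<Rightarrow> complex) \<Rightarrow> bool" where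
  "poly_in_A k f \<longleftrightarrow> (\<exists>S c. finite (S :: (nat \<Rightarrow> nat) set) \<and>
     (\<forall>A x. f A x = (\<Sum>\<alpha>\<in>S. c \<alpha> x * (\<Prod>a\<in>{1..k}. A a ^ \<alpha> a))))"

definition laurent_in :: "nat \<Rightarrow> ((nat \<Rightarrow> complex) \<Rightarrow> complex) \<Rightarrow> bool" where
  "laurent_in n g \<longleftrightarrow> (\<exists>T d. finite (T :: (nat \<Rightarrow> int) set) \<and>
     (\<forall>B. (\<forall>j\<in>{1..n}. B j \<noteq> 0) \<longrightarrow>
        g B = (\<Sum>\<beta>\<in>T. d \<beta> * (\<Prod>j\<in>{1..n}. B j powi \<beta> j))))"

definition symmetric_in :: "nat \<Rightarrow> ((nat \<Rightarrow> complex) \<Rightarrow> 'c) \<Rightarrow> bool" where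
  "symmetric_in n g \<longleftrightarrow> (\<forall>\<sigma> B. \<sigma> permutes {1..n} \<longrightarrow> g (B \<circ> \<sigma>) = g B)"

definition sym_laurent_poly :: "nat \<Rightarrow> nat \<Rightarrow> ((nat \<Rightarrow> complex) \<Rightarrow> (nat \<Rightarrow> complex) \<Rightarrow> complex) \<Rightarrow> bool" where
  "sym_laurent_poly k n P \<longleftrightarrow> (\<exists>S c. finite (S :: (nat \<Rightarrow> nat) set) \<and>
     (\<forall>\<alpha>\<in>S. laurent_in n (c \<alpha>) \<and> symmetric_in n (c \<alpha>)) \<and>
     (\<forall>A B. P A B = (\<Sum>\<alpha>\<in>S. c \<alpha> B * (\<Prod>a\<in>{1..k}. A a ^ \<alpha> a))))"

definition Asym :: "nat \<Rightarrow> nat \<Rightarrow> ((nat \<Rightarrow> complex) \<Rightarrow> complex) \<Rightarrow> (nat \<Rightarrow> complex) \<Rightarrow> complex" where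
  "Asym r l f A = (\<Sum>\<sigma>\<in>{\<sigma>. \<sigma> permutes {r+1..l}}. of_int (sign \<sigma>) * f (A \<circ> \<sigma>))"

definition Qplus :: "nat \<Rightarrow> nat \<Rightarrow> complex \<Rightarrow> nat \<Rightarrow> (nat \<Rightarrow> complex) \<Rightarrow> (nat \<Rightarrow> complex) \<Rightarrow> complex" where
  "Qplus m r y n A B =
     (\<Prod>a\<in>{r+1..ell m r n}. 1 - A a ^ 2 * exp (2 * y)) / (\<Prod>j\<in>{1..n}. 1 - B j * exp y)"

end

theory Submission
  imports Defs
begin

lemma poly_const: "poly_in_A k (\<lambda>A x. c x)"
  unfolding poly_in_A_def
  by (rule exI[of _ "{\<lambda>_. 0}"], rule exI[of _ "\<lambda>_ x. c x"]) simp

lemma poly_var_sq: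
  assumes "a \<in> {1..k}"
  shows "poly_in_A k (\<lambda>A x. A a ^ 2)"
  unfolding poly_in_A_def
proof (rule exI[of _ "{\<lambda>i. if i = a then 2 else 0}"], rule exI[of _ "\<lambda>_ x. 1"], intro conjI allI)
  fix A :: "nat \<Rightarrow> complex" and x :: 'b
  have "(\<Prod>i\<in>{1..k}. A i ^ (if i = a then 2 else 0)) = (\<Prod>i\<in>{1..k}. if i = a then A a ^ 2 else 1)"
    by (rule prod.cong) auto
  also have "\<dots> = A a ^ 2" using assms by (simp add: prod.delta)
  finally show "A a ^ 2 = (\<Sum>\<alpha>\<in>{\<lambda>i. if i = a then 2 else 0}. 1 * (\<Prod>i\<in>{1..k}. A i ^ \<alpha> i))"
    by simp
qed simp

lemma poly_add:
  assumes "poly_in_A k f" "poly_in_A k g"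
  shows "poly_in_A k (\<lambda>A x. f A x + g A x)"
proof -
  obtain S c where S: "finite S" "\<And>A x. f A x = (\<Sum>\<alpha>\<in>S. c \<alpha> x * (\<Prod>a\<in>{1..k}. A a ^ \<alpha> a))"
    using assms(1) unfolding poly_in_A_def by blast
  obtain T e where T: "finite T" "\<And>A x. g A x = (\<Sum>\<alpha>\<in>T. e \<alpha> x * (\<Prod>a\<in>{1..k}. A a ^ \<alpha> a))"
    using assms(2) unfolding poly_in_A_def by blast
  let ?U = "S \<union> T"
  have fU: "finite ?U" using S T by simp
  have 1: "(\<Sum>\<alpha>\<in>S. h \<alpha>) = (\<Sum>\<alpha>\<in>?U. if \<alpha> \<in> S then h \<alpha> else 0)" for h :: "_ \<Rightarrow> complex"
    using sum.inter_restrict[OF fU, of h S] by (simp add: Int_absorb1)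
  have 2: "(\<Sum>\<alpha>\<in>T. h \<alpha>) = (\<Sum>\<alpha>\<in>?U. if \<alpha> \<in> T then h \<alpha> else 0)" for h :: "_ \<Rightarrow> complex"
    using sum.inter_restrict[OF fU, of h T] by (simp add: Int_absorb1)
  show ?thesis unfolding poly_in_A_def
  proof (rule exI[of _ ?U], rule exI[of _ "\<lambda>\<alpha> x. (if \<alpha> \<in> S then c \<alpha> x else 0) + (if \<alpha> \<in> T then e \<alpha> x else 0)"], intro conjI allI)
    fix A x
    show "f A x + g A x = (\<Sum>\<alpha>\<in>?U. ((if \<alpha> \<in> S then c \<alpha> x else 0) + (if \<alpha> \<in> T then e \<alpha> x else 0)) * (\<Prod>a\<in>{1..k}. A a ^ \<alpha> a))"
      unfolding S(2) T(2) 1 2 sum.distrib[symmetric] by (rule sum.cong) (auto simp: distrib_right)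
  qed (rule fU)
qed

lemma poly_mult:
  assumes "poly_in_A k f" "poly_in_A k g"
  shows "poly_in_A k (\<lambda>A x. f A x * g A x)"
proof -
  obtain S c where S: "finite S" "\<And>A x. f A x = (\<Sum>\<alpha>\<in>S. c \<alpha> x * (\<Prod>a\<in>{1..k}. A a ^ \<alpha> a))"
    using assms(1) unfolding poly_in_A_def by blast
  obtain T e where T: "finite T" "\<And>A x. g A x = (\<Sum>\<alpha>\<in>T. e \<alpha> x * (\<Prod>a\<in>{1..k}. A a ^ \<alpha> a))"
    using assms(2) unfolding poly_in_A_def by blast
  define h where "h = (\<lambda>p :: (nat \<Rightarrow> nat) \<times> (nat \<Rightarrow> nat). \<lambda>i. fst p i + snd p i)"
  let ?U = "h ` (S \<times> T)"
  have fST: "finite (S \<times> T)" using S T by simp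
  show ?thesis unfolding poly_in_A_def
  proof (rule exI[of _ ?U], rule exI[of _ "\<lambda>\<gamma> x. \<Sum>p\<in>{p \<in> S \<times> T. h p = \<gamma>}. c (fst p) x * e (snd p) x"], intro conjI allI)
    fix A :: "nat \<Rightarrow> complex" and x
    define M where "M = (\<lambda>\<alpha>. \<Prod>a\<in>{1..k}. A a ^ \<alpha> a)"
    have M: "M (h p) = M (fst p) * M (snd p)" for p
      unfolding M_def h_def by (simp add: power_add prod.distrib)
    have "f A x * g A x = (\<Sum>p\<in>S \<times> T. c (fst p) x * e (snd p) x * M (h p))"
      unfolding S(2) T(2) sum_product sum.cartesian_product M
      by (rule sum.cong) (auto simp: mult_ac M_def)
    also have "\<dots> = (\<Sum>\<gamma>\<in>?U. \<Sum>p\<in>{p \<in> S \<times> T. h p = \<gamma>}. c (fst p) x * e (snd p) x * M (h p))"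
      by (rule sum.image_gen[OF fST])
    also have "\<dots> = (\<Sum>\<gamma>\<in>?U. (\<Sum>p\<in>{p \<in> S \<times> T. h p = \<gamma>}. c (fst p) x * e (snd p) x) * M \<gamma>)"
      by (rule sum.cong) (auto simp: sum_distrib_right)
    finally show "f A x * g A x = (\<Sum>\<gamma>\<in>?U. (\<Sum>p\<in>{p \<in> S \<times> T. h p = \<gamma>}. c (fst p) x * e (snd p) x) * (\<Prod>a\<in>{1..k}. A a ^ \<gamma> a))"
      unfolding M_def .
  qed (use fST in simp)
qed

lemma poly_prod:
  assumes "finite I" "\<And>i. i \<in> I \<Longrightarrow> poly_in_A k (f i)"
  shows "poly_in_A k (\<lambda>A x. \<Prod>i\<in>I. f i A x)"
  using assms
proof (induction I rule: finite_induct)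
  case empty then show ?case using poly_const[of k "\<lambda>_. 1"] by simp
next
  case (insert i I)
  then show ?case using poly_mult[of k "f i" "\<lambda>A x. \<Prod>i\<in>I. f i A x"] by simp
qed

lemma poly_Qnum:
  assumes "\<And>a. a \<in> I \<Longrightarrow> a \<in> {1..k}" "finite I"
  shows "poly_in_A k (\<lambda>A x. (\<Prod>a\<in>I. 1 - A a ^ 2 * z) * h x)"
proof -
  have "poly_in_A k (\<lambda>A x. 1 - A a ^ 2 * z)" if "a \<in> I" for a
  proof -
    have "poly_in_A k (\<lambda>A x. A a ^ 2 * (- z))"
      using poly_mult[OF poly_var_sq[OF assms(1)[OF that]] poly_const[of k "\<lambda>_. - z"]] by simp
    from poly_add[OF poly_const[of k "\<lambda>_. 1"] this] show ?thesis by simp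
  qed
  from poly_mult[OF poly_prod[OF assms(2) this] poly_const[of k h]] show ?thesis by simp
qed

lemma poly_pair:
  assumes "poly_in_A k (\<lambda>A x. f A (fst x) (snd x))"
  shows "poly_in_A k (\<lambda>A (a, b). f A a b)"
  using assms by (simp add: split_def)

lemma Asym_scale:
  assumes "\<And>\<sigma>. \<sigma> permutes {r+1..l} \<Longrightarrow> s (A \<circ> \<sigma>) = s A"
  shows "Asym r l (\<lambda>A'. f A' * s A') A = Asym r l f A * s A"
  unfolding Asym_def sum_distrib_right
  by (rule sum.cong) (auto simp: assms)

theorem proposition5:
  fixes m r :: nat and y :: complex
    and P :: "nat \<Rightarrow> (nat \<Rightarrow> complex) \<Rightarrow> (nat \<Rightarrow> complex) \<Rightarrow> complex"
    and tP bP :: "nat \<Rightarrow> (nat \<Rightarrow> complex) \<Rightarrow> (nat \<Rightarrow> complex) \<Rightarrow> complex \<Rightarrow> complex"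
    and d :: "nat \<Rightarrow> complex"
  assumes m_even: "even m" and mr: "2 * r \<le> m"
    and P_poly: "\<And>n. even n \<Longrightarrow> m \<le> n \<Longrightarrow> sym_laurent_poly (ell m r n) n (P n)"
    and tP_poly: "\<And>n. even n \<Longrightarrow> m + 2 \<le> n \<Longrightarrow>
        poly_in_A (ell m r n) (\<lambda>A (Bs, B). tP n A Bs B)"
    and bP_poly: "\<And>n. even n \<Longrightarrow> m + 2 \<le> n \<Longrightarrow>
        poly_in_A (ell m r n) (\<lambda>A (Bs, B). bP n A Bs B)"
    and cond1: "\<And>n A Bs B. even n \<Longrightarrow> m + 2 \<le> n \<Longrightarrow>
        (\<forall>j\<in>{1..n-2}. Bs j \<noteq> 0) \<Longrightarrow> B \<noteq> 0 \<Longrightarrow>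
        P n A (Bs(n-1 := B, n := -B)) = (\<Prod>a\<in>{1..r}. 1 - A a ^ 2 / B ^ 2) * tP n A Bs B"
    and cond2: "\<And>n A Bs B. even n \<Longrightarrow> m + 2 \<le> n \<Longrightarrow>
        (\<forall>j\<in>{1..n-2}. Bs j \<noteq> 0) \<Longrightarrow> B \<noteq> 0 \<Longrightarrow>
        Asym r (ell m r n) (\<lambda>A'. tP n A' Bs B) A =
        Asym r (ell m r n) (\<lambda>A'. (\<Prod>a\<in>{r+1..ell m r n - 1}. 1 - A' a ^ 2 / B ^ 2) * bP n A' Bs B) A"
    and cond3p: "\<And>n A Bs B. even n \<Longrightarrow> m + 2 \<le> n \<Longrightarrow>
        (\<forall>j\<in>{1..n-2}. Bs j \<noteq> 0) \<Longrightarrow> B \<noteq> 0 \<Longrightarrow>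
        bP n (A(ell m r n := B)) Bs B = B ^ (n - 1) * d n * P (n - 2) A Bs"
    and cond3m: "\<And>n A Bs B. even n \<Longrightarrow> m + 2 \<le> n \<Longrightarrow>
        (\<forall>j\<in>{1..n-2}. Bs j \<noteq> 0) \<Longrightarrow> B \<noteq> 0 \<Longrightarrow>
        bP n (A(ell m r n := -B)) Bs B = - (B ^ (n - 1) * d n * P (n - 2) A Bs)"
  defines "Pnew \<equiv> (\<lambda>n A B. P n A B * Qplus m r y n A B)"
  shows
    "(\<forall>n. even n \<and> m \<le> n \<longrightarrow>
        (\<forall>\<sigma> A B. \<sigma> permutes {1..n} \<longrightarrow>
           (\<forall>j\<in>{1..n}. B j \<noteq> 0 \<and> 1 - B j * exp y \<noteq> 0) \<longrightarrow>
           Pnew n A (B \<circ> \<sigma>) = Pnew n A B))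
     \<and> (\<exists>tPn bPn :: nat \<Rightarrow> (nat \<Rightarrow> complex) \<Rightarrow> (nat \<Rightarrow> complex) \<Rightarrow> complex \<Rightarrow> complex.
        \<forall>n. even n \<and> m + 2 \<le> n \<longrightarrow>
          poly_in_A (ell m r n) (\<lambda>A (Bs, B). tPn n A Bs B) \<and>
          poly_in_A (ell m r n) (\<lambda>A (Bs, B). bPn n A Bs B) \<and>
          (\<forall>A Bs B. (\<forall>j\<in>{1..n-2}. Bs j \<noteq> 0 \<and> 1 - Bs j * exp y \<noteq> 0) \<longrightarrow>
             B \<noteq> 0 \<longrightarrow> 1 - B ^ 2 * exp (2 * y) \<noteq> 0 \<longrightarrow>
             Pnew n A (Bs(n-1 := B, n := -B)) = (\<Prod>a\<in>{1..r}. 1 - A a ^ 2 / B ^ 2) * tPn n A Bs B \<and>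
             Asym r (ell m r n) (\<lambda>A'. tPn n A' Bs B) A =
               Asym r (ell m r n) (\<lambda>A'. (\<Prod>a\<in>{r+1..ell m r n - 1}. 1 - A' a ^ 2 / B ^ 2) * bPn n A' Bs B) A \<and>
             bPn n (A(ell m r n := B)) Bs B = B ^ (n - 1) * d n * Pnew (n - 2) A Bs \<and>
             bPn n (A(ell m r n := -B)) Bs B = - (B ^ (n - 1) * d n * Pnew (n - 2) A Bs)))"
proof -
  have part1: "\<forall>n. even n \<and> m \<le> n \<longrightarrow>
        (\<forall>\<sigma> A B. \<sigma> permutes {1..n} \<longrightarrow>
           (\<forall>j\<in>{1..n}. B j \<noteq> 0 \<and> 1 - B j * exp y \<noteq> 0) \<longrightarrow>
           Pnew n A (B \<circ> \<sigma>) = Pnew n A B)"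
  proof (intro allI impI)
    fix n \<sigma> A B
    assume n: "even n \<and> m \<le> n" and \<sigma>: "\<sigma> permutes {1..n}"
    obtain S c where Sc: "\<forall>\<alpha>\<in>S. laurent_in n (c \<alpha>) \<and> symmetric_in n (c \<alpha>)"
      "\<forall>A B. P n A B = (\<Sum>\<alpha>\<in>S. c \<alpha> B * (\<Prod>a\<in>{1..ell m r n}. A a ^ \<alpha> a))"
      using P_poly[of n] n unfolding sym_laurent_poly_def by blast
    have "P n A (B \<circ> \<sigma>) = P n A B"
      unfolding Sc(2)[rule_format] using Sc(1) \<sigma> by (intro sum.cong refl) (auto simp: symmetric_in_def)
    moreover have "(\<Prod>j\<in>{1..n}. 1 - (B \<circ> \<sigma>) j * exp y) = (\<Prod>j\<in>{1..n}. 1 - B j * exp y)"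
      using prod.permute[OF \<sigma>, of "\<lambda>j. 1 - B j * exp y"] by (simp add: o_def)
    ultimately show "Pnew n A (B \<circ> \<sigma>) = Pnew n A B"
      unfolding Pnew_def Qplus_def by simp
  qed
  define Qs where "Qs = (\<lambda>n A Bs B. Qplus m r y n A (Bs(n-1:=B, n:=-B)))"
  define tPn where "tPn = (\<lambda>n A Bs B. tP n A Bs B * Qs n A Bs B)"
  define bPn where "bPn = (\<lambda>n A Bs B. bP n A Bs B * Qs n A Bs B)"
  have Qs_poly: "poly_in_A (ell m r n) (\<lambda>A (Bs, B). Qs n A Bs B)" for n
  proof -
    have "poly_in_A (ell m r n) (\<lambda>A x. (\<Prod>a\<in>{r+1..ell m r n}. 1 - A a ^ 2 * exp (2 * y)) *
       (case x of (Bs, B) \<Rightarrow> 1 / (\<Prod>j\<in>{1..n}. 1 - (Bs(n-1:=B, n:=-B)) j * exp y)))"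
      by (rule poly_Qnum) auto
    then show ?thesis unfolding Qs_def Qplus_def
      by (intro poly_pair) (simp add: split_def)
  qed
  have Qs_sym: "Qs n (A \<circ> \<sigma>) Bs B = Qs n A Bs B" if "\<sigma> permutes {r+1..ell m r n}" for n A Bs B \<sigma>
    using prod.permute[OF that, of "\<lambda>a. 1 - A a ^ 2 * exp (2 * y)"]
    unfolding Qs_def Qplus_def by (simp add: o_def)
  have Qs_shift: "Qs n (A(ell m r n := s * B)) Bs B = Qplus m r y (n - 2) A Bs"
    if n: "m + 2 \<le> n" and B: "1 - B ^ 2 * exp (2 * y) \<noteq> 0" and s: "s = 1 \<or> s = -1" for n A Bs B s
  proof -
    have el: "ell m r (n - 2) = ell m r n - 1" "r + 1 \<le> ell m r n"
      using n unfolding ell_def by (auto simp: div_if)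
    have ss: "(s * B) ^ 2 = B ^ 2" using s by auto
    have num: "(\<Prod>a\<in>{r+1..ell m r n}. 1 - (A(ell m r n := s * B)) a ^ 2 * exp (2 * y)) =
        (\<Prod>a\<in>{r+1..ell m r (n-2)}. 1 - A a ^ 2 * exp (2 * y)) * (1 - B ^ 2 * exp (2 * y))"
    proof -
      have "{r+1..ell m r n} = insert (ell m r n) {r+1..ell m r (n-2)}" using el by auto
      moreover have "(\<Prod>a\<in>{r+1..ell m r (n-2)}. 1 - (A(ell m r n := s * B)) a ^ 2 * exp (2 * y)) =
          (\<Prod>a\<in>{r+1..ell m r (n-2)}. 1 - A a ^ 2 * exp (2 * y))"
        using el by (intro prod.cong) auto
      ultimately show ?thesis using el ss by (simp add: mult_ac)
    qed
    have den: "(\<Prod>j\<in>{1..n}. 1 - (Bs(n-1:=B, n:=-B)) j * exp y) =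
        (\<Prod>j\<in>{1..n-2}. 1 - Bs j * exp y) * (1 - B ^ 2 * exp (2 * y))"
    proof -
      have e: "{1..n} = insert n (insert (n-1) {1..n-2})" using n by auto
      have p: "(\<Prod>j\<in>{1..n-2}. 1 - (Bs(n-1:=B, n:=-B)) j * exp y) = (\<Prod>j\<in>{1..n-2}. 1 - Bs j * exp y)"
        using n by (intro prod.cong) auto
      have q: "(1 - B * exp y) * (1 + B * exp y) = 1 - B ^ 2 * exp (2 * y)"
        by (simp add: algebra_simps power2_eq_square mult_exp_exp)
      have "(\<Prod>j\<in>{1..n}. 1 - (Bs(n-1:=B, n:=-B)) j * exp y) =
          (1 + B * exp y) * ((1 - B * exp y) * (\<Prod>j\<in>{1..n-2}. 1 - (Bs(n-1:=B, n:=-B)) j * exp y))"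
      proof -
        define F where "F = (\<lambda>j. 1 - (Bs(n-1:=B, n:=-B)) j * exp y)"
        have n1: "n \<notin> insert (n-1) {1..n-2}" "n - 1 \<notin> {1..n-2}" using n by auto
        have "prod F {1..n} = F n * (F (n-1) * prod F {1..n-2})"
          unfolding e using n1 by simp
        moreover have "F n = 1 + B * exp y" "F (n-1) = 1 - B * exp y" using n unfolding F_def by auto
        ultimately show ?thesis unfolding F_def by simp
      qed
      also have "\<dots> = (\<Prod>j\<in>{1..n-2}. 1 - Bs j * exp y) * (1 - B ^ 2 * exp (2 * y))"
        unfolding p q[symmetric] by (simp add: mult_ac)
      finally show ?thesis .
    qed
    show ?thesis unfolding Qs_def Qplus_def num den using B by simp
  qed
  show ?thesis
  proof (rule conjI[OF part1], rule exI[of _ tPn], rule exI[of _ bPn], intro allI impI conjI)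
    fix n assume n: "even n \<and> m + 2 \<le> n"
    show "poly_in_A (ell m r n) (\<lambda>A (Bs, B). tPn n A Bs B)"
      using poly_mult[OF tP_poly[of n] Qs_poly[of n]] n unfolding tPn_def
      by (intro poly_pair) (simp add: split_def)
    show "poly_in_A (ell m r n) (\<lambda>A (Bs, B). bPn n A Bs B)"
      using poly_mult[OF bP_poly[of n] Qs_poly[of n]] n unfolding bPn_def
      by (intro poly_pair) (simp add: split_def)
    fix A Bs B
    assume Bs: "\<forall>j\<in>{1..n - 2}. Bs j \<noteq> 0 \<and> 1 - Bs j * exp y \<noteq> 0" and B0: "B \<noteq> 0"
      and B: "1 - B ^ 2 * exp (2 * y) \<noteq> 0"
    have Bs': "\<forall>j\<in>{1..n - 2}. Bs j \<noteq> 0" using Bs by auto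
    show "Pnew n A (Bs(n - 1 := B, n := - B)) = (\<Prod>a = 1..r. 1 - A a ^ 2 / B ^ 2) * tPn n A Bs B"
      unfolding Pnew_def tPn_def Qs_def using cond1[OF _ _ Bs' B0] n by simp
    show "Asym r (ell m r n) (\<lambda>A'. tPn n A' Bs B) A =
      Asym r (ell m r n) (\<lambda>A'. (\<Prod>a = r + 1..ell m r n - 1. 1 - A' a ^ 2 / B ^ 2) * bPn n A' Bs B) A"
    proof -
      have "Asym r (ell m r n) (\<lambda>A'. tPn n A' Bs B) A = Asym r (ell m r n) (\<lambda>A'. tP n A' Bs B) A * Qs n A Bs B"
        unfolding tPn_def by (rule Asym_scale) (rule Qs_sym)
      also have "\<dots> = Asym r (ell m r n) (\<lambda>A'. (\<Prod>a = r + 1..ell m r n - 1. 1 - A' a ^ 2 / B ^ 2) * bP n A' Bs B) A * Qs n A Bs B"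
        using cond2[OF _ _ Bs' B0] n by simp
      also have "\<dots> = Asym r (ell m r n) (\<lambda>A'. (\<Prod>a = r + 1..ell m r n - 1. 1 - A' a ^ 2 / B ^ 2) * bP n A' Bs B * Qs n A' Bs B) A"
        by (rule Asym_scale[symmetric]) (rule Qs_sym)
      finally show ?thesis unfolding bPn_def by (simp add: mult_ac)
    qed
    show "bPn n (A(ell m r n := B)) Bs B = B ^ (n - 1) * d n * Pnew (n - 2) A Bs"
      using Qs_shift[where n=n and A=A and Bs=Bs and B=B and s=1] cond3p[OF _ _ Bs' B0, of A] n B
      unfolding bPn_def Pnew_def by simp
    show "bPn n (A(ell m r n := - B)) Bs B = - (B ^ (n - 1) * d n * Pnew (n - 2) A Bs)"
      using Qs_shift[where n=n and A=A and Bs=Bs and B=B and s="-1"] cond3m[OF _ _ Bs' B0, of A] n B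
      unfolding bPn_def Pnew_def by simp
  qed
qed

end
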